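(* For any time warp $f$, $n\in\omega\setminus\{0\}$, and $m\in\omega$: $f^{r}(n)=m\iff f(m)\le n<f(m+1)$; $f^{r}(n)=\omega\iff f(\omega)\le n$; $f^{r}(\omega)=m\iff f(m+1)=\omega$ and $f^{r}(k)=m$ for some $k\in\omega$; $f^{r}(\omega)=\omega\iff f(\omega)<\omega$ or ($f(\omega)=\omega$ and $f(k)<\omega$ for all $k\in\omega$).
   Context: Let $\overline{\omega}=\omega\cup\{\omega\}$ be the natural numbers with a top element $\omega$ adjoined, with its natural total order. A time warp is a monotone map $f\colon\overline{\omega}\to\overline{\omega}$ with $f(0)=0$ and $f(\omega)=\bigvee\{f(n)\mid n\in\omega\}$. The set $W$ of time warps is ordered pointwise and $fg:=f\circ g$; $\mathrm{id}$ is the identity. The left residual $\backslash$ is the binary operation on $W$ with $g\le f\backslash h\iff fg\le h$ for all $f,g,h\in W$. Define $f^{r}:=f\backslash\mathrm{id}$. *)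

theory Defs
  imports "HOL-Library.Extended_Nat"
begin

text \<open>omega-bar = natural numbers with top adjoined, modelled as enat (\<infinity> = omega).\<close>

definition time_warp :: "(enat \<Rightarrow> enat) \<Rightarrow> bool" where
  "time_warp f \<longleftrightarrow> mono f \<and> f 0 = 0 \<and> f \<infinity> = (SUP n. f (enat n))"

definition W :: "(enat \<Rightarrow> enat) set" where
  "W = {f. time_warp f}"

definition lres :: "(enat \<Rightarrow> enat) \<Rightarrow> (enat \<Rightarrow> enat) \<Rightarrow> (enat \<Rightarrow> enat)" where
  "lres f h = (THE g0. g0 \<in> W \<and> (\<forall>g\<in>W. g \<le> g0 \<longleftrightarrow> f \<circ> g \<le> h))"

definition rres :: "(enat \<Rightarrow> enat) \<Rightarrow> (enat \<Rightarrow> enat)" where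
  "rres f = lres f id"

end

theory Submission
  imports Defs
begin

lemma finite_lt_enat: "finite {y::enat. y < enat k}"
proof -
  have "{y::enat. y < enat k} \<subseteq> enat ` {..<k}"
    by (auto simp: image_iff) (metis enat_ord_simps(2) less_enatE lessThan_iff)
  thus ?thesis by (rule finite_subset) simp
qed

lemma attained:
  assumes tw: "time_warp f"
  shows "Sup {y. f y \<le> enat n} \<in> {y. f y \<le> enat n}"
proof (cases "f \<infinity> \<le> enat n")
  case True
  hence "\<infinity> \<in> {y. f y \<le> enat n}" by simp
  hence "\<infinity> \<le> Sup {y. f y \<le> enat n}" by (rule Sup_upper)
  hence "Sup {y. f y \<le> enat n} = \<infinity>" by simp
  thus ?thesis using True by simp
next
  case False
  from tw have mf: "mono f" and f0: "f 0 = 0" and fi: "f \<infinity> = (SUP k. f (enat k))"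
    by (auto simp: time_warp_def)
  from False fi have "enat n < (SUP k. f (enat k))" by simp
  then obtain k where k: "enat n < f (enat k)" by (auto simp: less_SUP_iff)
  have sub: "{y. f y \<le> enat n} \<subseteq> {y. y < enat k}"
  proof
    fix y assume "y \<in> {y. f y \<le> enat n}"
    hence "f y \<le> enat n" by simp
    show "y \<in> {y. y < enat k}"
    proof (rule ccontr)
      assume "y \<notin> {y. y < enat k}"
      hence "enat k \<le> y" by simp
      hence "f (enat k) \<le> f y" using mf by (simp add: monoD)
      thus False using k \<open>f y \<le> enat n\<close> by simp
    qed
  qed
  have fin: "finite {y. f y \<le> enat n}" using sub finite_lt_enat finite_subset by blast
  have ne: "{y. f y \<le> enat n} \<noteq> {}" using f0 by (metis (mono_tags) empty_iff mem_Collect_eq zero_le)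
  have "Sup {y. f y \<le> enat n} = Max {y. f y \<le> enat n}" by (rule cSup_eq_Max[OF fin ne])
  thus ?thesis using Max_in[OF fin ne] by simp
qed

definition hh :: "(enat \<Rightarrow> enat) \<Rightarrow> nat \<Rightarrow> enat" where
  "hh f n = (if n = 0 then 0 else Sup {y. f y \<le> enat n})"

definition gg :: "(enat \<Rightarrow> enat) \<Rightarrow> enat \<Rightarrow> enat" where
  "gg f x = (if x = \<infinity> then (SUP n. hh f n) else hh f (the_enat x))"

lemma hh_prop:
  assumes tw: "time_warp f" and "n \<noteq> 0"
  shows "f (hh f n) \<le> enat n" "\<And>y. f y \<le> enat n \<Longrightarrow> y \<le> hh f n"
  using attained[OF tw, of n] assms by (auto simp: hh_def Sup_upper)

lemma hh_mono: "m \<le> n \<Longrightarrow> hh f m \<le> hh f n"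
  unfolding hh_def
  by (auto intro!: Sup_subset_mono) (meson enat_ord_simps(1) order_trans)

lemma gg_W: assumes tw: "time_warp f" shows "gg f \<in> W"
proof -
  have "mono (gg f)"
  proof (rule monoI)
    fix x y :: enat assume "x \<le> y"
    show "gg f x \<le> gg f y"
    proof (cases y)
      case infinity
      thus ?thesis by (cases x) (auto simp: gg_def intro: SUP_upper)
    next
      case (enat b)
      with \<open>x \<le> y\<close> obtain a where "x = enat a" "a \<le> b" by (cases x) auto
      thus ?thesis using enat by (simp add: gg_def hh_mono)
    qed
  qed
  moreover have "gg f 0 = 0" by (simp add: gg_def hh_def zero_enat_def)
  moreover have "gg f \<infinity> = (SUP n. gg f (enat n))" by (simp add: gg_def)
  ultimately show ?thesis by (simp add: W_def time_warp_def)
qed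

lemma gg_char:
  assumes tw: "time_warp f" and g'W: "g' \<in> W"
  shows "g' \<le> gg f \<longleftrightarrow> f \<circ> g' \<le> id"
proof -
  from tw have mf: "mono f" and f0: "f 0 = 0" by (auto simp: time_warp_def)
  from g'W have g'0: "g' 0 = 0" and g'i: "g' \<infinity> = (SUP n. g' (enat n))"
    by (auto simp: W_def time_warp_def)
  have fg: "f (gg f x) \<le> x" for x
  proof (cases x)
    case (enat n)
    thus ?thesis
    proof (cases "n = 0")
      case True thus ?thesis using enat f0 by (simp add: gg_def hh_def zero_enat_def)
    next
      case False thus ?thesis using enat hh_prop(1)[OF tw False] by (simp add: gg_def)
    qed
  qed simp
  show ?thesis
  proof
    assume "g' \<le> gg f"
    show "f \<circ> g' \<le> id"
    proof (rule le_funI)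
      fix x
      have "f (g' x) \<le> f (gg f x)" using \<open>g' \<le> gg f\<close> mf by (simp add: le_fun_def monoD)
      thus "(f \<circ> g') x \<le> id x" using fg[of x] by simp
    qed
  next
    assume H: "f \<circ> g' \<le> id"
    have fin: "g' (enat n) \<le> hh f n" for n
    proof (cases "n = 0")
      case True thus ?thesis using g'0 by (simp add: zero_enat_def hh_def)
    next
      case False
      have "f (g' (enat n)) \<le> enat n" using H by (simp add: le_fun_def)
      thus ?thesis by (rule hh_prop(2)[OF tw False])
    qed
    show "g' \<le> gg f"
    proof (rule le_funI)
      fix x show "g' x \<le> gg f x"
      proof (cases x)
        case (enat n) thus ?thesis using fin by (simp add: gg_def)
      next
        case infinity thus ?thesis using fin g'i by (simp add: gg_def SUP_mono')
      qed
    qed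
  qed
qed

lemma rres_eq: assumes tw: "time_warp f" shows "rres f = gg f"
proof -
  have P: "gg f \<in> W \<and> (\<forall>g\<in>W. g \<le> gg f \<longleftrightarrow> f \<circ> g \<le> id)"
    using gg_W[OF tw] gg_char[OF tw] by blast
  show ?thesis unfolding rres_def lres_def
  proof (rule the_equality)
    show "gg f \<in> W \<and> (\<forall>g\<in>W. g \<le> gg f \<longleftrightarrow> f \<circ> g \<le> id)" by (rule P)
  next
    fix g0 assume A: "g0 \<in> W \<and> (\<forall>g\<in>W. g \<le> g0 \<longleftrightarrow> f \<circ> g \<le> id)"
    have "f \<circ> g0 \<le> id" using A by blast
    hence "g0 \<le> gg f" using P A by blast
    moreover have "f \<circ> gg f \<le> id" using P by blast
    hence "gg f \<le> g0" using P A by blast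
    ultimately show "g0 = gg f" by (rule antisym)
  qed
qed

lemma bound:
  assumes tw: "time_warp f" and inf: "f (enat (m + 1)) = \<infinity>"
  shows "hh f k \<le> enat m"
proof (cases "k = 0")
  case True thus ?thesis by (simp add: hh_def)
next
  case False
  show ?thesis
  proof (rule ccontr)
    assume "\<not> hh f k \<le> enat m"
    hence "enat (Suc m) \<le> hh f k" using Suc_ile_eq by fastforce
    hence "f (enat (m+1)) \<le> f (hh f k)" using tw by (simp add: time_warp_def monoD)
    thus False using hh_prop(1)[OF tw False] inf by simp
  qed
qed

theorem lemma2p6:
  fixes f :: "enat \<Rightarrow> enat" and n m :: nat
  assumes "f \<in> W" and "n \<noteq> 0"
  shows "(rres f (enat n) = enat m \<longleftrightarrow> f (enat m) \<le> enat n \<and> enat n < f (enat (m + 1)))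
    \<and> (rres f (enat n) = \<infinity> \<longleftrightarrow> f \<infinity> \<le> enat n)
    \<and> (rres f \<infinity> = enat m \<longleftrightarrow> f (enat (m + 1)) = \<infinity> \<and> (\<exists>k::nat. rres f (enat k) = enat m))
    \<and> (rres f \<infinity> = \<infinity> \<longleftrightarrow> f \<infinity> < \<infinity> \<or> (f \<infinity> = \<infinity> \<and> (\<forall>k::nat. f (enat k) < \<infinity>)))"
proof -
  have tw: "time_warp f" using assms(1) by (simp add: W_def)
  from tw have mf: "mono f" and f0: "f 0 = 0" and fi: "f \<infinity> = (SUP k. f (enat k))"
    by (auto simp: time_warp_def)
  have R: "rres f (enat k) = hh f k" for k by (simp add: rres_eq[OF tw] gg_def)
  have Ri: "rres f \<infinity> = (SUP k. hh f k)" by (simp add: rres_eq[OF tw] gg_def)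
  have p2: "hh f k = \<infinity> \<longleftrightarrow> f \<infinity> \<le> enat k" if "k \<noteq> 0" for k
    using hh_prop(2)[OF tw that, of \<infinity>] hh_prop(1)[OF tw that] by auto
  have p1: "hh f n = enat m \<longleftrightarrow> f (enat m) \<le> enat n \<and> enat n < f (enat (m + 1))"
  proof
    assume "hh f n = enat m"
    thus "f (enat m) \<le> enat n \<and> enat n < f (enat (m + 1))"
      using hh_prop(2)[OF tw assms(2), of "enat (m+1)"] hh_prop(1)[OF tw assms(2)] by (auto simp: not_le[symmetric])
  next
    assume A: "f (enat m) \<le> enat n \<and> enat n < f (enat (m + 1))"
    have "enat m \<le> hh f n" using A hh_prop(2)[OF tw assms(2)] by blast
    moreover have "hh f n \<le> enat m"
    proof (rule ccontr)
      assume "\<not> hh f n \<le> enat m"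
      hence "enat (Suc m) \<le> hh f n" using Suc_ile_eq by fastforce
      hence "f (enat (m+1)) \<le> f (hh f n)" using mf by (simp add: monoD)
      hence "f (enat (m+1)) \<le> enat n" using hh_prop(1)[OF tw assms(2)] by (rule order_trans)
      thus False using A leD by blast
    qed
    ultimately show "hh f n = enat m" by simp
  qed
  have p3: "(SUP k. hh f k) = enat m \<longleftrightarrow> f (enat (m + 1)) = \<infinity> \<and> (\<exists>k. hh f k = enat m)"
  proof
    assume S: "(SUP k. hh f k) = enat m"
    have le: "hh f k \<le> enat m" for k using S by (metis SUP_upper UNIV_I)
    have "\<exists>k. hh f k = enat m"
    proof (rule ccontr)
      assume N: "\<not> (\<exists>k. hh f k = enat m)"
      hence "m \<noteq> 0" by (metis hh_def zero_enat_def)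
      have "hh f k \<le> enat (m - 1)" for k
      proof -
        have "hh f k < enat m" using le[of k] N by (metis order.not_eq_order_implies_strict)
        thus ?thesis using \<open>m \<noteq> 0\<close> by (cases "hh f k") auto
      qed
      hence "(SUP k. hh f k) \<le> enat (m - 1)" by (simp add: SUP_least)
      thus False using S \<open>m \<noteq> 0\<close> by simp
    qed
    moreover have "f (enat (m + 1)) = \<infinity>"
    proof (rule ccontr)
      assume "f (enat (m + 1)) \<noteq> \<infinity>"
      then obtain N where N: "f (enat (m + 1)) = enat N" by auto
      have "max N 1 \<noteq> 0" by simp
      have "f (enat (m + 1)) \<le> enat (max N 1)" using N by simp
      hence "enat (m+1) \<le> hh f (max N 1)" using hh_prop(2)[OF tw \<open>max N 1 \<noteq> 0\<close>] by blast
      also have "\<dots> \<le> enat m" by (rule le)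
      finally show False by simp
    qed
    ultimately show "f (enat (m + 1)) = \<infinity> \<and> (\<exists>k. hh f k = enat m)" by blast
  next
    assume A: "f (enat (m + 1)) = \<infinity> \<and> (\<exists>k. hh f k = enat m)"
    then obtain k where k: "hh f k = enat m" by blast
    have "(SUP k. hh f k) \<le> enat m" using bound[OF tw] A by (simp add: SUP_least)
    moreover have "enat m \<le> (SUP k. hh f k)" using k by (metis SUP_upper UNIV_I)
    ultimately show "(SUP k. hh f k) = enat m" by simp
  qed
  have p4: "(SUP k. hh f k) = \<infinity> \<longleftrightarrow> f \<infinity> < \<infinity> \<or> (f \<infinity> = \<infinity> \<and> (\<forall>k::nat. f (enat k) < \<infinity>))"
  proof
    assume S: "(SUP k. hh f k) = \<infinity>"
    show "f \<infinity> < \<infinity> \<or> (f \<infinity> = \<infinity> \<and> (\<forall>k::nat. f (enat k) < \<infinity>))"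
    proof (rule ccontr)
      assume "\<not> ?thesis"
      then obtain k where k: "f (enat k) = \<infinity>" by auto
      with f0 have "k \<noteq> 0" by (metis zero_enat_def enat.distinct(1))
      then obtain j where "k = j + 1" by (metis Suc_eq_plus1 not0_implies_Suc)
      hence "(SUP k. hh f k) \<le> enat j" using bound[OF tw] k by (simp add: SUP_least)
      thus False using S by simp
    qed
  next
    assume A: "f \<infinity> < \<infinity> \<or> (f \<infinity> = \<infinity> \<and> (\<forall>k::nat. f (enat k) < \<infinity>))"
    show "(SUP k. hh f k) = \<infinity>"
    proof (cases "f \<infinity> < \<infinity>")
      case True
      then obtain N where N: "f \<infinity> = enat N" by (cases "f \<infinity>") auto
      have "Suc N \<noteq> 0" by simp
      have "hh f (Suc N) = \<infinity>" using p2[OF \<open>Suc N \<noteq> 0\<close>] N by simp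
      thus ?thesis by (metis SUP_upper UNIV_I top.extremum_unique top_enat_def)
    next
      case False
      with A have fk: "\<forall>k::nat. f (enat k) < \<infinity>" by simp
      have J: "enat j \<le> (SUP k. hh f k)" for j
      proof -
        obtain M where M: "f (enat j) = enat M" using fk by (metis less_infinityE)
        have "Suc M \<noteq> 0" by simp
        have "enat j \<le> hh f (Suc M)" using hh_prop(2)[OF tw \<open>Suc M \<noteq> 0\<close>] M by simp
        also have "\<dots> \<le> (SUP k. hh f k)" by (metis SUP_upper UNIV_I)
        finally show ?thesis .
      qed
      show ?thesis
      proof (cases "(SUP k. hh f k)")
        case (enat a) thus ?thesis using J[of "Suc a"] by simp
      qed simp
    qed
  qed
  show ?thesis using p1 p2[OF assms(2)] p3 p4 R Ri by simp
qed

end
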